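(* Let $n\ge 2$, let $T=\{1,\dots,n\}$ and let $\mathcal T$ be a topology on $T$. Fix an integer $k\ge 1$ and let $X_{k-1}$ be the set of points $\alpha\in T\setminus\{n\}$ whose covering set $\alpha^{*}$ is an $m$-system for some $m<k$. Let $P$ be a $k$-system of $\mathcal T$ with $P\setminus\{n\}\subseteq X_{k-1}$. Then either $P$ is a union of $k'$-systems with $k'<k$, or $P=n^{*}$.
   Context: For $\alpha\in T$, $\alpha^{*}$ (the covering set of $\alpha$) denotes the smallest open set of $\mathcal T$ containing $\alpha$. For an integer $m\ge 0$, an $m$-system is an open set $P$ of $\mathcal T$ such that $P\setminus\{n\}$ has exactly $m$ points. *)

theory Defs
  imports "HOL-Analysis.Analysis"
begin

text \<open>Covering set: the smallest open set containing a (the intersection of all open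
sets containing a; in a finite topology this is itself open).\<close>
definition covering_set :: "'a topology \<Rightarrow> 'a \<Rightarrow> 'a set" where
  "covering_set X a = \<Inter> {U. openin X U \<and> a \<in> U}"

definition m_system :: "nat topology \<Rightarrow> nat \<Rightarrow> nat \<Rightarrow> nat set \<Rightarrow> bool" where
  "m_system X n m P \<longleftrightarrow> openin X P \<and> finite (P - {n}) \<and> card (P - {n}) = m"

definition X_set :: "nat topology \<Rightarrow> nat \<Rightarrow> nat \<Rightarrow> nat set" where
  "X_set X n k = {a \<in> topspace X - {n}. \<exists>m<k. m_system X n m (covering_set X a)}"

end

theory Submission
  imports Defs
begin

lemma cov_sub: "openin X P \<Longrightarrow> a \<in> P \<Longrightarrow> covering_set X a \<subseteq> P"
  unfolding covering_set_def by blast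

lemma cov_mem: "a \<in> topspace X \<Longrightarrow> a \<in> covering_set X a"
  unfolding covering_set_def by auto

lemma cov_open: assumes "finite (topspace X)" "a \<in> topspace X"
  shows "openin X (covering_set X a)"
proof -
  have "{U. openin X U \<and> a \<in> U} \<subseteq> Pow (topspace X)" using openin_subset by blast
  hence f: "finite {U. openin X U \<and> a \<in> U}" using assms(1) by (meson finite_Pow_iff finite_subset)
  have "topspace X \<in> {U. openin X U \<and> a \<in> U}" using assms(2) by auto
  hence ne: "{U. openin X U \<and> a \<in> U} \<noteq> {}" by blast
  show ?thesis unfolding covering_set_def by (rule openin_Inter[OF f ne]) blast
qed

theorem theorem1:
  fixes X :: "nat topology" and n k :: nat and P :: "nat set"
  assumes "n \<ge> 2"
    and "topspace X = {1..n}"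
    and "k \<ge> 1"
    and "m_system X n k P"
    and "P - {n} \<subseteq> X_set X n k"
  shows "(\<exists>F. P = \<Union>F \<and> (\<forall>Q\<in>F. \<exists>k'<k. m_system X n k' Q))
         \<or> P = covering_set X n"
proof -
  have oP: "openin X P" and cP: "card (P - {n}) = k" and fP: "finite (P - {n})"
    using assms(4) unfolding m_system_def by auto
  have PT: "P \<subseteq> topspace X" using oP openin_subset by blast
  define F where "F = covering_set X ` (P - {n})"
  have Fok: "\<forall>Q\<in>F. \<exists>k'<k. m_system X n k' Q"
    using assms(5) unfolding F_def X_set_def by auto
  have FP: "\<Union>F \<subseteq> P" unfolding F_def using cov_sub[OF oP] by blast
  have PF: "P - {n} \<subseteq> \<Union>F"
  proof
    fix x assume x: "x \<in> P - {n}"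
    hence "x \<in> topspace X" using PT by blast
    hence "x \<in> covering_set X x" by (rule cov_mem)
    moreover have "covering_set X x \<in> F" unfolding F_def using x by blast
    ultimately show "x \<in> \<Union>F" by blast
  qed
  show ?thesis
  proof (cases "n \<in> P")
    case False
    hence "P = \<Union>F" using FP PF by blast
    thus ?thesis using Fok by blast
  next
    case True
    have nT: "n \<in> topspace X" using True PT by blast
    have fin: "finite (topspace X)" using assms(2) by simp
    have on: "openin X (covering_set X n)" using cov_open[OF fin nT] .
    have nP: "covering_set X n \<subseteq> P" using cov_sub[OF oP True] .
    have nn: "n \<in> covering_set X n" using cov_mem[OF nT] .
    show ?thesis
    proof (cases "card (covering_set X n - {n}) < k")
      case True
      have fn: "finite (covering_set X n - {n})" 
        by (rule finite_subset[OF _ fP]) (use nP in blast)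
      have "m_system X n (card (covering_set X n - {n})) (covering_set X n)"
        unfolding m_system_def using on fn by auto
      hence "\<forall>Q\<in>insert (covering_set X n) F. \<exists>k'<k. m_system X n k' Q" using Fok True by auto
      moreover have "P = \<Union>(insert (covering_set X n) F)" using FP PF nP nn by blast
      ultimately show ?thesis by blast
    next
      case False
      have sub: "covering_set X n - {n} \<subseteq> P - {n}" using nP by blast
      have "covering_set X n - {n} = P - {n}"
        using card_subset_eq[OF fP sub] False cP card_mono[OF fP sub] by linarith
      hence "P = covering_set X n" using nn \<open>n \<in> P\<close> by blast
      thus ?thesis by blast
    qed
  qed
qed

end
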